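(* Let $G$ be a graph in which every vertex belongs to a simplicial clique, and let $S$ be a degree-greedy stable set in $G$. Then every vertex of $S$ is simplicial, and $S$ contains exactly one vertex of each simplicial clique of $G$.
   Context: A vertex $v$ is simplicial if $N[v]$ is a clique; a clique is simplicial if it equals $N[v]$ for a simplicial vertex $v$. For a linear order $\sigma=(v_1,\dots,v_n)$ of $V(G)$, the $\sigma$-greedy stable set is obtained by scanning $v_1,\dots,v_n$ in order, starting with $S=\emptyset$, and adding $v_i$ to $S$ whenever $S\cup\{v_i\}$ is stable. A degree-greedy stable set is a $\sigma$-greedy stable set for some order $\sigma$ with $d_G(v_i)\le d_G(v_j)$ whenever $i<j$ (degrees taken in $G$). *)

theory Defs
  imports Main
begin

definition graph :: "'a set \<Rightarrow> ('a \<Rightarrow> 'a \<Rightarrow> bool) \<Rightarrow> bool" where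
  "graph V E \<longleftrightarrow> finite V \<and> (\<forall>u v. E u v \<longrightarrow> u \<in> V \<and> v \<in> V)
     \<and> (\<forall>u v. E u v \<longrightarrow> E v u) \<and> (\<forall>v. \<not> E v v)"

definition nbhd :: "'a set \<Rightarrow> ('a \<Rightarrow> 'a \<Rightarrow> bool) \<Rightarrow> 'a \<Rightarrow> 'a set" where
  "nbhd V E v = {u \<in> V. E v u}"

definition closed_nbhd :: "'a set \<Rightarrow> ('a \<Rightarrow> 'a \<Rightarrow> bool) \<Rightarrow> 'a \<Rightarrow> 'a set" where
  "closed_nbhd V E v = insert v (nbhd V E v)"

definition degree :: "'a set \<Rightarrow> ('a \<Rightarrow> 'a \<Rightarrow> bool) \<Rightarrow> 'a \<Rightarrow> nat" where
  "degree V E v = card (nbhd V E v)"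

definition clique :: "'a set \<Rightarrow> ('a \<Rightarrow> 'a \<Rightarrow> bool) \<Rightarrow> 'a set \<Rightarrow> bool" where
  "clique V E C \<longleftrightarrow> C \<subseteq> V \<and> (\<forall>u\<in>C. \<forall>w\<in>C. u \<noteq> w \<longrightarrow> E u w)"

definition stable :: "'a set \<Rightarrow> ('a \<Rightarrow> 'a \<Rightarrow> bool) \<Rightarrow> 'a set \<Rightarrow> bool" where
  "stable V E S \<longleftrightarrow> S \<subseteq> V \<and> (\<forall>u\<in>S. \<forall>w\<in>S. \<not> E u w)"

definition simplicial :: "'a set \<Rightarrow> ('a \<Rightarrow> 'a \<Rightarrow> bool) \<Rightarrow> 'a \<Rightarrow> bool" where
  "simplicial V E v \<longleftrightarrow> v \<in> V \<and> clique V E (closed_nbhd V E v)"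

definition simplicial_clique :: "'a set \<Rightarrow> ('a \<Rightarrow> 'a \<Rightarrow> bool) \<Rightarrow> 'a set \<Rightarrow> bool" where
  "simplicial_clique V E C \<longleftrightarrow> (\<exists>v. simplicial V E v \<and> C = closed_nbhd V E v)"

definition greedy_stable :: "'a set \<Rightarrow> ('a \<Rightarrow> 'a \<Rightarrow> bool) \<Rightarrow> 'a list \<Rightarrow> 'a set" where
  "greedy_stable V E \<sigma> =
     foldl (\<lambda>S v. if stable V E (insert v S) then insert v S else S) {} \<sigma>"

definition degree_greedy_stable :: "'a set \<Rightarrow> ('a \<Rightarrow> 'a \<Rightarrow> bool) \<Rightarrow> 'a set \<Rightarrow> bool" where
  "degree_greedy_stable V E S \<longleftrightarrow>
     (\<exists>\<sigma>. distinct \<sigma> \<and> set \<sigma> = V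
        \<and> (\<forall>i j. i < j \<and> j < length \<sigma> \<longrightarrow> degree V E (\<sigma> ! i) \<le> degree V E (\<sigma> ! j))
        \<and> S = greedy_stable V E \<sigma>)"

end

theory Submission
  imports Defs
begin

definition gstep :: "'a set \<Rightarrow> ('a \<Rightarrow> 'a \<Rightarrow> bool) \<Rightarrow> 'a set \<Rightarrow> 'a \<Rightarrow> 'a set" where
  "gstep V E S v = (if stable V E (insert v S) then insert v S else S)"

lemma greedy_eq: "greedy_stable V E \<sigma> = foldl (gstep V E) {} \<sigma>"
  unfolding greedy_stable_def gstep_def by simp

lemma foldl_sup: "S0 \<subseteq> foldl (gstep V E) S0 xs"
proof (induction xs arbitrary: S0)
  case Nil then show ?case by simp
next
  case (Cons a xs)
  have "gstep V E S0 a \<subseteq> foldl (gstep V E) (gstep V E S0 a) xs" by (rule Cons)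
  moreover have "S0 \<subseteq> gstep V E S0 a" by (auto simp: gstep_def)
  ultimately show ?case by simp
qed

lemma foldl_sub: "foldl (gstep V E) S0 xs \<subseteq> S0 \<union> set xs"
proof (induction xs arbitrary: S0)
  case Nil then show ?case by simp
next
  case (Cons a xs)
  have "foldl (gstep V E) (gstep V E S0 a) xs \<subseteq> gstep V E S0 a \<union> set xs" by (rule Cons)
  moreover have "gstep V E S0 a \<subseteq> insert a S0" by (auto simp: gstep_def)
  ultimately show ?case by auto
qed

lemma foldl_stable: "stable V E S0 \<Longrightarrow> stable V E (foldl (gstep V E) S0 xs)"
  by (induction xs arbitrary: S0) (auto simp: gstep_def)

lemma stable_noE: "stable V E S \<Longrightarrow> u \<in> S \<Longrightarrow> x \<in> S \<Longrightarrow> \<not> E u x"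
  unfolding stable_def by blast

lemma stable_empty: "stable V E {}" by (simp add: stable_def)

theorem lemma9:
  fixes V :: "'a set" and E :: "'a \<Rightarrow> 'a \<Rightarrow> bool" and S :: "'a set"
  assumes "graph V E"
    and "\<forall>v\<in>V. \<exists>C. simplicial_clique V E C \<and> v \<in> C"
    and "degree_greedy_stable V E S"
  shows "(\<forall>v\<in>S. simplicial V E v)
    \<and> (\<forall>C. simplicial_clique V E C \<longrightarrow> card (S \<inter> C) = 1)"
proof -
  have fin: "finite V" and inV: "\<And>u v. E u v \<Longrightarrow> u \<in> V \<and> v \<in> V"
    and sym: "\<And>u v. E u v \<Longrightarrow> E v u" and irr: "\<And>v. \<not> E v v"
    using assms(1) unfolding graph_def by auto
  obtain \<sigma> where dist: "distinct \<sigma>" and setV: "set \<sigma> = V"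
    and deg: "\<And>i j. i < j \<Longrightarrow> j < length \<sigma> \<Longrightarrow> degree V E (\<sigma> ! i) \<le> degree V E (\<sigma> ! j)"
    and Sdef: "S = foldl (gstep V E) {} \<sigma>"
    using assms(3) unfolding degree_greedy_stable_def greedy_eq by blast
  define P where "P i = foldl (gstep V E) {} (take i \<sigma>)" for i
  have Sstab: "stable V E S" unfolding Sdef by (rule foldl_stable[OF stable_empty])
  have PS: "P i \<subseteq> P j" if "i \<le> j" for i j
  proof -
    have "take j \<sigma> = take i \<sigma> @ drop i (take j \<sigma>)"
      using that by (metis append_take_drop_id min.absorb1 take_take)
    then show ?thesis unfolding P_def by (metis foldl_append foldl_sup)
  qed
  have PinS: "P i \<subseteq> S" for i
  proof -
    have "P i \<subseteq> P (max i (length \<sigma>))" by (rule PS) simp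
    also have "P (max i (length \<sigma>)) = S" unfolding P_def Sdef by simp
    finally show ?thesis .
  qed
  have Pstab: "stable V E (P i)" for i unfolding P_def by (rule foldl_stable[OF stable_empty])
  have Pset: "u \<in> P i \<Longrightarrow> \<exists>k<i. k < length \<sigma> \<and> u = \<sigma> ! k" for u i
  proof -
    assume "u \<in> P i"
    then have "u \<in> set (take i \<sigma>)" unfolding P_def using foldl_sub by fastforce
    then show ?thesis by (auto simp: in_set_conv_nth)
  qed
  have Psuc: "P (Suc i) = gstep V E (P i) (\<sigma> ! i)" if "i < length \<sigma>" for i
    unfolding P_def using that by (simp add: take_Suc_conv_app_nth)
  have mem: "\<sigma> ! i \<in> S \<longleftrightarrow> stable V E (insert (\<sigma> ! i) (P i))" if i: "i < length \<sigma>" for i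
  proof
    assume st: "stable V E (insert (\<sigma> ! i) (P i))"
    then have "\<sigma> ! i \<in> P (Suc i)" using Psuc[OF i] by (simp add: gstep_def)
    then show "\<sigma> ! i \<in> S" using PinS by blast
  next
    assume inS: "\<sigma> ! i \<in> S"
    show "stable V E (insert (\<sigma> ! i) (P i))"
    proof (rule ccontr)
      assume ns: "\<not> ?thesis"
      have dec: "\<sigma> = take (Suc i) \<sigma> @ drop (Suc i) \<sigma>" by simp
      have "S = foldl (gstep V E) (P (Suc i)) (drop (Suc i) \<sigma>)"
        unfolding Sdef P_def by (subst dec) (simp only: foldl_append)
      also have "P (Suc i) = P i" using Psuc[OF i] ns by (simp add: gstep_def)
      finally have "S \<subseteq> P i \<union> set (drop (Suc i) \<sigma>)" using foldl_sub by metis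
      with inS have "\<sigma> ! i \<in> P i \<or> \<sigma> ! i \<in> set (drop (Suc i) \<sigma>)" by blast
      then show False
      proof
        assume "\<sigma> ! i \<in> P i"
        then obtain k where "k < i" "\<sigma> ! i = \<sigma> ! k" using Pset by blast
        then show False using dist i by (simp add: nth_eq_iff_index_eq)
      next
        assume "\<sigma> ! i \<in> set (drop (Suc i) \<sigma>)"
        then obtain k where "k < length \<sigma> - Suc i" "\<sigma> ! i = \<sigma> ! (Suc i + k)"
          by (auto simp: in_set_conv_nth)
        then show False using dist i by (simp add: nth_eq_iff_index_eq)
      qed
    qed
  qed
  have blocked: "\<exists>u\<in>P i. E w u" if "w \<in> V" "\<not> stable V E (insert w (P i))" for w i
  proof -
    have PV: "P i \<subseteq> V" using Pstab[of i] by (simp add: stable_def)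
    have "\<not> (\<forall>a\<in>insert w (P i). \<forall>b\<in>insert w (P i). \<not> E a b)"
      using that(2) PV that(1) unfolding stable_def by simp
    then obtain a b where ab: "a \<in> insert w (P i)" "b \<in> insert w (P i)" "E a b" by blast
    show ?thesis
    proof (cases "a = w")
      case True
      then show ?thesis using ab irr by (metis insertE)
    next
      case False
      then have aP: "a \<in> P i" using ab by simp
      show ?thesis
      proof (cases "b = w")
        case True then show ?thesis using aP ab sym by blast
      next
        case False then have "b \<in> P i" using ab by simp
        then show ?thesis using aP ab stable_noE[OF Pstab] by blast
      qed
    qed
  qed
  have Ssub: "S \<subseteq> V" using Sstab by (simp add: stable_def)
  have idx: "\<exists>i<length \<sigma>. \<sigma> ! i = v" if "v \<in> V" for v
    using that setV by (auto simp: in_set_conv_nth)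
  have cn: "closed_nbhd V E w = insert w {u\<in>V. E w u}" for w
    by (simp add: closed_nbhd_def nbhd_def)
  have part1: "simplicial V E v" if vS: "v \<in> S" for v
  proof (rule ccontr)
    assume nsv: "\<not> simplicial V E v"
    have vV: "v \<in> V" using vS Ssub by blast
    obtain C where "simplicial_clique V E C" "v \<in> C" using assms(2) vV by blast
    then obtain w where sw: "simplicial V E w" and vC: "v \<in> closed_nbhd V E w"
      unfolding simplicial_clique_def by blast
    have wV: "w \<in> V" using sw by (simp add: simplicial_def)
    have cl: "clique V E (closed_nbhd V E w)" using sw by (simp add: simplicial_def)
    have vw: "v \<noteq> w" using sw nsv by metis
    have Evw: "E w v" using vC vw by (simp add: cn)
    have sub: "closed_nbhd V E w \<subseteq> closed_nbhd V E v"
    proof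
      fix u assume u: "u \<in> closed_nbhd V E w"
      show "u \<in> closed_nbhd V E v"
      proof (cases "u = v")
        case True then show ?thesis by (simp add: closed_nbhd_def)
      next
        case False
        then have "E u v" using cl u vC unfolding clique_def by blast
        then have "E v u" by (rule sym)
        moreover have "u \<in> V" using inV \<open>E u v\<close> by blast
        ultimately show ?thesis by (simp add: closed_nbhd_def nbhd_def)
      qed
    qed
    have neq: "closed_nbhd V E w \<noteq> closed_nbhd V E v"
    proof
      assume "closed_nbhd V E w = closed_nbhd V E v"
      then have "clique V E (closed_nbhd V E v)" using cl by simp
      then show False using nsv vV by (simp add: simplicial_def)
    qed
    have finN: "finite (nbhd V E x)" for x using fin by (simp add: nbhd_def)
    have cardc: "card (closed_nbhd V E x) = Suc (degree V E x)" for x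
    proof -
      have "x \<notin> nbhd V E x" using irr by (simp add: nbhd_def)
      then show ?thesis using finN[of x] by (simp add: closed_nbhd_def degree_def)
    qed
    have "card (closed_nbhd V E w) < card (closed_nbhd V E v)"
    proof (rule psubset_card_mono)
      show "finite (closed_nbhd V E v)" using finN by (simp add: closed_nbhd_def)
      show "closed_nbhd V E w \<subset> closed_nbhd V E v" using sub neq by blast
    qed
    then have dlt: "degree V E w < degree V E v" using cardc by simp
    obtain i where i: "i < length \<sigma>" "\<sigma> ! i = w" using idx wV by blast
    obtain j where j: "j < length \<sigma>" "\<sigma> ! j = v" using idx vV by blast
    have ij: "i < j"
    proof (rule ccontr)
      assume "\<not> i < j"
      then have "j < i \<or> j = i" by auto
      then show False using deg[of j i] i j dlt vw by auto
    qed
    have stj: "stable V E (insert v (P j))" using mem[OF j(1)] j vS by simp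
    show False
    proof (cases "stable V E (insert w (P i))")
      case True
      then have "w \<in> P (Suc i)" using Psuc[OF i(1)] i by (simp add: gstep_def)
      then have "w \<in> P j" using PS[of "Suc i" j] ij by auto
      then show False using stable_noE[OF stj, of v w] Evw sym by simp
    next
      case False
      then obtain u where uP: "u \<in> P i" and Ewu: "E w u" using blocked wV by blast
      obtain k where k: "k < i" "k < length \<sigma>" "u = \<sigma> ! k" using Pset[OF uP] by blast
      have uv: "u \<noteq> v"
      proof
        assume "u = v"
        then have "\<sigma> ! k = \<sigma> ! j" using k j by simp
        then have "k = j" using dist k(2) j(1) by (simp add: nth_eq_iff_index_eq)
        then show False using k ij by simp
      qed
      have "u \<in> closed_nbhd V E w" using Ewu inV by (auto simp: cn)
      then have "E u v" using cl vC uv unfolding clique_def by blast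
      moreover have "u \<in> P j" using uP PS[of i j] ij by auto
      ultimately show False using stable_noE[OF stj, of u v] by simp
    qed
  qed
  have part2: "card (S \<inter> C) = 1" if sc: "simplicial_clique V E C" for C
  proof -
    obtain w where sw: "simplicial V E w" and Cw: "C = closed_nbhd V E w"
      using sc unfolding simplicial_clique_def by blast
    have wV: "w \<in> V" using sw by (simp add: simplicial_def)
    have cl: "clique V E C" using sw Cw by (simp add: simplicial_def)
    obtain i where i: "i < length \<sigma>" "\<sigma> ! i = w" using idx wV by blast
    have "\<exists>x. x \<in> S \<inter> C"
    proof (cases "stable V E (insert w (P i))")
      case True
      then have "w \<in> S" using mem[OF i(1)] i by simp
      then show ?thesis using Cw by (auto simp: closed_nbhd_def)
    next
      case False
      then obtain u where uP: "u \<in> P i" and Ewu: "E w u" using blocked wV by blast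
      then have "u \<in> S" using PinS by blast
      moreover have "u \<in> C" using Ewu inV Cw by (auto simp: cn)
      ultimately show ?thesis by blast
    qed
    then obtain x where x: "x \<in> S \<inter> C" by blast
    have "\<forall>y\<in>S \<inter> C. y = x"
    proof
      fix y assume y: "y \<in> S \<inter> C"
      show "y = x"
      proof (rule ccontr)
        assume "y \<noteq> x"
        then have "E y x" using cl x y unfolding clique_def by blast
        then show False using stable_noE[OF Sstab, of y x] x y by blast
      qed
    qed
    then have "S \<inter> C = {x}" using x by blast
    then show ?thesis by simp
  qed
  show ?thesis using part1 part2 by blast
qed

end
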